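(* Let $K\ge2$, $n\ge1$, $\alpha\in(0,1)$, and let $\mathcal L_X$ be a continuous (atomless) distribution on a space $\mathcal X$. Let $C$ be a measurable function of data $(X_1,Y_1),\dots,(X_n,Y_n)\in(\mathcal X\times\{1,\dots,K\})^n$ with the following property: for every joint distribution $\mathcal L$ of $(X,Y)$ whose $X$-marginal is $\mathcal L_X$ and whose $Y$-marginal is $\mathrm{Unif}(\{1,\dots,K\})$, if $(X_i,Y_i)_{i=1}^n$ are i.i.d. from $\mathcal L$ then $\mathbb P_{\mathcal L}\big(C(X_{1:n},Y_{1:n})\ge\mathrm{ETV}(X,Y)\big)\ge1-\alpha$. Then, when $(X_i,Y_i)\stackrel{\text{i.i.d.}}{\sim}\mathcal L_X\times\mathrm{Unif}(\{1,\dots,K\})$ (so that $X$ and $Y$ are independent), $$\mathbb P\big(C(X_{1:n},Y_{1:n})\ge1\big)\ge1-\alpha.$$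
   Context: For $(X,Y)\sim\mathcal L$ with $Y\in\{1,\dots,K\}$, $\mathrm{ETV}(X,Y)=\frac{1}{1-1/K}\,\mathbb E_{\mathcal L}\big[\mathrm{TV}(\mathcal L(Y\mid X),\mathcal L(Y))\big]$, where $\mathrm{TV}$ is total variation distance (half the $L_1$ distance). This quantity always lies in $[0,1]$, and $1$ is its theoretical upper bound. *)

theory Defs
  imports "HOL-Probability.Probability"
begin

definition atomless :: "'a measure \<Rightarrow> bool" where
  "atomless M \<longleftrightarrow> (\<forall>A\<in>sets M. emeasure M A > 0 \<longrightarrow>
      (\<exists>B\<in>sets M. B \<subseteq> A \<and> 0 < emeasure M B \<and> emeasure M B < emeasure M A))"

definition obs_space :: "'x measure \<Rightarrow> nat \<Rightarrow> ('x \<times> nat) measure" where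
  "obs_space MX K = MX \<Otimes>\<^sub>M count_space {1..K}"

text \<open>Conditional probability P(Y = k | X), as a function on the sample space,
  via conditional expectation w.r.t. the sigma-algebra generated by X = fst.\<close>
definition cond_prob_Y :: "'x measure \<Rightarrow> ('x \<times> nat) measure \<Rightarrow> nat \<Rightarrow> ('x \<times> nat) \<Rightarrow> real" where
  "cond_prob_Y MX L k = real_cond_exp L (vimage_algebra (space L) fst MX)
      (\<lambda>z. if snd z = k then 1 else 0)"

definition ETV :: "'x measure \<Rightarrow> nat \<Rightarrow> ('x \<times> nat) measure \<Rightarrow> real" where
  "ETV MX K L = (1 / (1 - 1 / real K)) *
     (\<integral>z. (1/2) * (\<Sum>k\<in>{1..K}. \<bar>cond_prob_Y MX L k z
              - measure L {w \<in> space L. snd w = k}\<bar>) \<partial>L)"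

end

theory Submission
  imports Defs
begin

lemma atomless_half:
  assumes P: "prob_space M" and at: "atomless M" and A: "A \<in> sets M" and pos: "measure M A > 0"
  shows "\<exists>B\<in>sets M. B \<subseteq> A \<and> 0 < measure M B \<and> 2 * measure M B \<le> measure M A"
proof -
  interpret prob_space M by fact
  have "emeasure M A > 0" using pos by (simp add: emeasure_eq_measure)
  then obtain B where B: "B \<in> sets M" "B \<subseteq> A" "0 < emeasure M B" "emeasure M B < emeasure M A"
    using at A unfolding atomless_def by blast
  have mB: "0 < measure M B" "measure M B < measure M A"
    using B by (simp_all add: emeasure_eq_measure ennreal_less_iff)
  have AB: "measure M (A - B) = measure M A - measure M B"
    using B A by (simp add: finite_measure_Diff)
  show ?thesis
  proof (cases "2 * measure M B \<le> measure M A")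
    case True thus ?thesis using B mB by blast
  next
    case False
    thus ?thesis using AB mB A B by (intro bexI[of _ "A - B"]) auto
  qed
qed

lemma atomless_small:
  assumes P: "prob_space M" and at: "atomless M" and A: "A \<in> sets M" and pos: "measure M A > 0"
    and e: "e > 0"
  shows "\<exists>B\<in>sets M. B \<subseteq> A \<and> 0 < measure M B \<and> measure M B \<le> e"
proof -
  interpret prob_space M by fact
  have ind: "\<exists>B\<in>sets M. B \<subseteq> A \<and> 0 < measure M B \<and> measure M B * 2 ^ k \<le> measure M A" for k
  proof (induction k)
    case 0 thus ?case using A pos by auto
  next
    case (Suc k)
    then obtain B where B: "B \<in> sets M" "B \<subseteq> A" "0 < measure M B" "measure M B * 2 ^ k \<le> measure M A" by blast
    obtain B' where B': "B' \<in> sets M" "B' \<subseteq> B" "0 < measure M B'" "2 * measure M B' \<le> measure M B"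
      using atomless_half[OF P at B(1,3)] by blast
    have "measure M B' * 2 ^ Suc k = (2 * measure M B') * 2 ^ k" by simp
    also have "\<dots> \<le> measure M B * 2 ^ k" using B' by (intro mult_right_mono) auto
    also have "\<dots> \<le> measure M A" using B(4) .
    finally show ?case using B B' by (intro bexI[of _ B']) auto
  qed
  obtain k where k: "1 / e < (2::real) ^ k" using real_arch_pow[of 2 "1/e"] by auto
  obtain B where B: "B \<in> sets M" "B \<subseteq> A" "0 < measure M B" "measure M B * 2 ^ k \<le> measure M A"
    using ind by blast
  have "measure M B * 2 ^ k \<le> 1" using B(4) prob_le_1[of A] by linarith
  hence "measure M B * (1/e) \<le> 1" using k B(3)
    by (smt (verit) mult_strict_left_mono)
  hence "measure M B \<le> e" using e by (simp add: field_simps)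
  thus ?thesis using B by blast
qed

primrec greedy_seq :: "('a set \<Rightarrow> 'a set) \<Rightarrow> nat \<Rightarrow> 'a set" where
  "greedy_seq f 0 = {}"
| "greedy_seq f (Suc k) = greedy_seq f k \<union> f (greedy_seq f k)"

lemma atomless_exact:
  assumes P: "prob_space M" and at: "atomless M" and A: "A \<in> sets M"
    and t: "0 \<le> t" "t \<le> measure M A"
  shows "\<exists>B\<in>sets M. B \<subseteq> A \<and> measure M B = t"
proof -
  interpret prob_space M by fact
  define good where "good B E \<longleftrightarrow> E \<in> sets M \<and> E \<subseteq> A - B \<and> measure M B + measure M E \<le> t" for B E
  define \<delta> where "\<delta> B = Sup {measure M E | E. good B E}" for B
  define nxt where "nxt B = (SOME E. good B E \<and> \<delta> B / 2 \<le> measure M E)" for B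
  have bdd: "bdd_above {measure M E | E. good B E}" for B
    by (rule bdd_aboveI[of _ 1]) auto
  have nxt: "good B (nxt B) \<and> \<delta> B / 2 \<le> measure M (nxt B)" if "measure M B \<le> t" for B
  proof -
    have ne: "{measure M E | E. good B E} \<noteq> {}" using that unfolding good_def
      by (auto intro!: exI[of _ "{}"])
    have "\<exists>E. good B E \<and> \<delta> B / 2 \<le> measure M E"
    proof (cases "\<delta> B > 0")
      case True
      hence "\<delta> B / 2 < Sup {measure M E | E. good B E}" unfolding \<delta>_def by simp
      then obtain x where "x \<in> {measure M E | E. good B E}" "\<delta> B / 2 < x"
        using less_cSup_iff[OF ne bdd] by blast
      thus ?thesis by force
    next
      case False thus ?thesis using that unfolding good_def by (intro exI[of _ "{}"]) auto
    qed
    thus ?thesis unfolding nxt_def by (rule someI_ex)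
  qed
  define Bs where "Bs = greedy_seq nxt"
  have inv: "Bs k \<in> sets M \<and> Bs k \<subseteq> A \<and> measure M (Bs k) \<le> t" for k
  proof (induction k)
    case 0 thus ?case using t by (simp add: Bs_def)
  next
    case (Suc k)
    have g: "good (Bs k) (nxt (Bs k))" using nxt Suc by blast
    have "Bs (Suc k) = Bs k \<union> nxt (Bs k)" unfolding Bs_def by simp
    moreover have "measure M (Bs k \<union> nxt (Bs k)) = measure M (Bs k) + measure M (nxt (Bs k))"
      using g Suc unfolding good_def by (intro finite_measure_Union) auto
    ultimately show ?case using g Suc unfolding good_def Bs_def by auto
  qed
  have step: "measure M (Bs (Suc k)) = measure M (Bs k) + measure M (nxt (Bs k))"
     and dl: "\<delta> (Bs k) / 2 \<le> measure M (nxt (Bs k))" for k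
  proof -
    have g: "good (Bs k) (nxt (Bs k))" and "\<delta> (Bs k) / 2 \<le> measure M (nxt (Bs k))"
      using nxt inv by blast+
    thus "\<delta> (Bs k) / 2 \<le> measure M (nxt (Bs k))" by simp
    have "Bs (Suc k) = Bs k \<union> nxt (Bs k)" unfolding Bs_def by simp
    moreover have "measure M (Bs k \<union> nxt (Bs k)) = measure M (Bs k) + measure M (nxt (Bs k))"
      using g inv[of k] unfolding good_def by (intro finite_measure_Union) auto
    ultimately show "measure M (Bs (Suc k)) = measure M (Bs k) + measure M (nxt (Bs k))" by simp
  qed
  have incs: "incseq Bs" unfolding incseq_Suc_iff Bs_def by auto
  have lim: "(\<lambda>k. measure M (Bs k)) \<longlonglongrightarrow> measure M (\<Union>k. Bs k)"
    using inv incs by (intro finite_Lim_measure_incseq) auto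
  have diff0: "(\<lambda>k. measure M (Bs (Suc k)) - measure M (Bs k)) \<longlonglongrightarrow> 0"
    using tendsto_diff[OF LIMSEQ_Suc[OF lim] lim] by simp
  define B where "B = (\<Union>k. Bs k)"
  have Bm: "B \<in> sets M" "B \<subseteq> A" using inv unfolding B_def by auto
  have Ble: "measure M B \<le> t"
    using lim inv unfolding B_def by (intro LIMSEQ_le_const2[OF lim]) auto
  have "measure M B = t"
  proof (rule ccontr)
    assume "measure M B \<noteq> t"
    hence lt: "measure M B < t" using Ble by auto
    have "measure M (A - B) = measure M A - measure M B" using Bm A by (simp add: finite_measure_Diff)
    hence pos: "measure M (A - B) > 0" using lt t by simp
    obtain E where E: "E \<in> sets M" "E \<subseteq> A - B" "0 < measure M E" "measure M E \<le> t - measure M B"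
      using atomless_small[OF P at _ pos, of "t - measure M B"] Bm A lt by auto
    have "measure M E \<le> \<delta> (Bs k)" for k
    proof -
      have "measure M (Bs k) \<le> measure M B" unfolding B_def
        using inv by (intro finite_measure_mono) auto
      hence "good (Bs k) E" unfolding good_def using E unfolding B_def by auto
      thus ?thesis unfolding \<delta>_def by (intro cSup_upper bdd) auto
    qed
    note Ed = this
    have "measure M E / 2 \<le> measure M (Bs (Suc k)) - measure M (Bs k)" for k
      using Ed[of k] dl[of k] step[of k] by linarith
    hence "measure M E / 2 \<le> 0"
      by (intro LIMSEQ_le_const[OF diff0]) auto
    thus False using E by simp
  qed
  thus ?thesis using Bm by blast
qed

lemma atomless_partition:
  fixes M :: "'a measure" and N :: nat
  assumes P: "prob_space M" and at: "atomless M" and N: "N > 0"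
  shows "\<exists>h::'a \<Rightarrow> nat. h \<in> measurable M (count_space UNIV) \<and> (\<forall>x\<in>space M. h x < N) \<and>
             (\<forall>j<N. measure M {x\<in>space M. h x = j} = 1 / N)"
proof -
  interpret prob_space M by fact
  have ex: "\<exists>P::nat \<Rightarrow> 'a set. (\<forall>i\<in>{1..j}. P i \<in> sets M \<and> measure M (P i) = 1 / N) \<and>
               disjoint_family_on P {1..j}" if "j < N" for j
    using that
  proof (induction j)
    case 0 thus ?case by (auto simp: disjoint_family_on_def)
  next
    case (Suc j)
    then obtain P where P: "\<forall>i\<in>{1..j}. P i \<in> sets M \<and> measure M (P i) = 1 / N"
      "disjoint_family_on P {1..j}" by auto
    define R where "R = space M - (\<Union>i\<in>{1..j}. P i)"
    have U: "measure M (\<Union>i\<in>{1..j}. P i) = (\<Sum>i\<in>{1..j}. measure M (P i))"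
      using P by (intro measure_finite_Union) auto
    also have "\<dots> = j / N" using P by simp
    finally have U': "measure M (\<Union>i\<in>{1..j}. P i) = j / N" .
    have Rs: "R \<in> sets M" unfolding R_def using P by auto
    have "measure M R = 1 - j / N" unfolding R_def using P U'
      by (subst prob_compl) auto
    moreover have "1 / N \<le> 1 - j / N" using Suc.prems N by (simp add: field_simps)
    ultimately obtain B where B: "B \<in> sets M" "B \<subseteq> R" "measure M B = 1 / N"
      using atomless_exact[OF assms(1,2) Rs, of "1 / real N"] by auto
    show ?case
    proof (intro exI[of _ "P(Suc j := B)"] conjI)
      show "\<forall>i\<in>{1..Suc j}. (P(Suc j := B)) i \<in> sets M \<and> measure M ((P(Suc j := B)) i) = 1 / N"
        using P B by (auto simp: le_Suc_eq)
      show "disjoint_family_on (P(Suc j := B)) {1..Suc j}"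
        unfolding disjoint_family_on_def
      proof (intro ballI impI)
        fix a b assume ab: "a \<in> {1..Suc j}" "b \<in> {1..Suc j}" "a \<noteq> b"
        show "(P(Suc j := B)) a \<inter> (P(Suc j := B)) b = {}"
        proof (cases "a = Suc j \<or> b = Suc j")
          case True
          thus ?thesis using ab B(2) unfolding R_def by (auto simp: le_Suc_eq)
        next
          case False
          thus ?thesis using ab P(2) unfolding disjoint_family_on_def by (auto simp: le_Suc_eq)
        qed
      qed
    qed
  qed
  obtain P where P: "\<forall>i\<in>{1..N-1}. P i \<in> sets M \<and> measure M (P i) = 1 / N"
      "disjoint_family_on P {1..N-1}" using ex[of "N - 1"] N by auto
  define h where "h x = (if \<exists>i\<in>{1..N-1}. x \<in> P i then (THE i. i\<in>{1..N-1} \<and> x \<in> P i) else 0)" for x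
  have hP: "h x = i" if "i \<in> {1..N-1}" "x \<in> P i" for x i
  proof -
    have "(THE i. i\<in>{1..N-1} \<and> x \<in> P i) = i"
    proof (rule the_equality)
      show "i \<in> {1..N-1} \<and> x \<in> P i" using that by auto
      fix i' assume i': "i' \<in> {1..N-1} \<and> x \<in> P i'"
      show "i' = i"
      proof (rule ccontr)
        assume "i' \<noteq> i"
        hence "P i' \<inter> P i = {}" using P(2) i' that unfolding disjoint_family_on_def by blast
        thus False using i' that by blast
      qed
    qed
    thus ?thesis unfolding h_def using that by auto
  qed
  have h0: "h x = 0" if "\<forall>i\<in>{1..N-1}. x \<notin> P i" for x
    unfolding h_def using that by auto
  have hP2: "h x \<in> {1..N-1} \<and> x \<in> P (h x)" if "h x \<noteq> 0" for x
  proof -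
    have "\<exists>i\<in>{1..N-1}. x \<in> P i"
    proof (rule ccontr)
      assume "\<not> (\<exists>i\<in>{1..N-1}. x \<in> P i)"
      hence "h x = 0" by (intro h0) blast
      thus False using that by contradiction
    qed
    then obtain i where "i\<in>{1..N-1}" "x \<in> P i" by blast
    thus ?thesis using hP[of i x] by simp
  qed
  have sub: "P i \<subseteq> space M" if "i \<in> {1..N-1}" for i
  proof -
    have "P i \<in> sets M" using P that by blast
    thus ?thesis by (rule sets.sets_into_space)
  qed
  have pre: "{x\<in>space M. h x = a} = (if a \<in> {1..N-1} then P a else if a = 0 then space M - (\<Union>i\<in>{1..N-1}. P i) else {})" for a
  proof (cases "a \<in> {1..N-1}")
    case True
    have "{x\<in>space M. h x = a} = P a"
    proof (intro equalityI subsetI)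
      fix x assume "x \<in> {x\<in>space M. h x = a}"
      thus "x \<in> P a" using hP2[of x] True by auto
    next
      fix x assume "x \<in> P a"
      thus "x \<in> {x\<in>space M. h x = a}" using sub[OF True] hP[OF True] by auto
    qed
    thus ?thesis using True by simp
  next
    case False
    show ?thesis
    proof (cases "a = 0")
      case True
      have "{x\<in>space M. h x = a} = space M - (\<Union>i\<in>{1..N-1}. P i)"
      proof (intro equalityI subsetI)
        fix x assume x: "x \<in> {x\<in>space M. h x = a}"
        { fix i assume "i \<in> {1..N-1}" "x \<in> P i"
          hence "h x = i" by (rule hP)
          hence False using x True \<open>i \<in> {1..N-1}\<close> by auto }
        thus "x \<in> space M - (\<Union>i\<in>{1..N-1}. P i)" using x by blast
      next
        fix x assume "x \<in> space M - (\<Union>i\<in>{1..N-1}. P i)"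
        thus "x \<in> {x\<in>space M. h x = a}" using h0[of x] True by auto
      qed
      thus ?thesis using True False by simp
    next
      case False2: False
      have "{x\<in>space M. h x = a} = {}"
      proof -
        { fix x assume "x \<in> space M" "h x = a"
          hence False using hP2[of x] False False2 by auto }
        thus ?thesis by blast
      qed
      thus ?thesis using False False2 by simp
    qed
  qed
  have hmeas: "h \<in> measurable M (count_space UNIV)"
  proof (subst measurable_count_space_eq2_countable, simp, safe)
    fix a
    have eq: "h -` {a} \<inter> space M = {x\<in>space M. h x = a}" by auto
    have "(\<Union>i\<in>{1..N-1}. P i) \<in> sets M" using P by (intro sets.finite_UN) auto
    hence "space M - (\<Union>i\<in>{1..N-1}. P i) \<in> sets M" by auto
    thus "h -` {a} \<inter> space M \<in> sets M" unfolding eq pre using P by auto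
  qed
  have hlt: "h x < N" for x
    using hP2[of x] N by (cases "h x = 0") auto
  have U: "measure M (\<Union>i\<in>{1..N-1}. P i) = (\<Sum>i\<in>{1..N-1}. measure M (P i))"
    using P by (intro measure_finite_Union) auto
  also have "\<dots> = (N - 1) / N" using P N by (simp add: of_nat_diff)
  finally have U': "measure M (\<Union>i\<in>{1..N-1}. P i) = (N - 1) / N" .
  have "measure M {x\<in>space M. h x = j} = 1 / N" if "j < N" for j
  proof (cases "j = 0")
    case True
    have "measure M (space M - (\<Union>i\<in>{1..N-1}. P i)) = 1 - (N - 1) / N"
      using P U' by (subst prob_compl) auto
    also have "\<dots> = 1 / N" using N by (simp add: field_simps of_nat_diff)
    finally show ?thesis unfolding pre using True by simp
  next
    case False
    thus ?thesis unfolding pre using that P by auto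
  qed
  thus ?thesis using hmeas hlt by blast
qed


lemma atomless_partition_set:
  fixes M :: "'a measure" and T :: "'t set"
  assumes P: "prob_space M" and at: "atomless M" and T: "finite T" "T \<noteq> {}"
  shows "\<exists>h. h \<in> measurable M (count_space T) \<and> (\<forall>t\<in>T. measure M {x\<in>space M. h x = t} = 1 / card T)"
proof -
  define N where "N = card T"
  have N: "N > 0" using T unfolding N_def by (simp add: card_gt_0_iff)
  obtain e where e: "bij_betw e {0..<N} T" using ex_bij_betw_nat_finite[OF T(1)] unfolding N_def by blast
  obtain h0 :: "'a \<Rightarrow> nat" where h0: "h0 \<in> measurable M (count_space UNIV)" "\<forall>x\<in>space M. h0 x < N"
    "\<forall>j<N. measure M {x\<in>space M. h0 x = j} = 1 / N"
    using atomless_partition[OF P at N] by blast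
  define h where "h x = e (h0 x)" for x
  have pre: "{x\<in>space M. h x = t} = {x\<in>space M. h0 x = the_inv_into {0..<N} e t}" if t: "t \<in> T" for t
  proof -
    have "h x = t \<longleftrightarrow> h0 x = the_inv_into {0..<N} e t" if x: "x \<in> space M" for x
    proof
      assume "h x = t"
      thus "h0 x = the_inv_into {0..<N} e t" unfolding h_def using e h0(2) x
        by (auto intro!: the_inv_into_f_f[symmetric] simp: bij_betw_def)
    next
      assume "h0 x = the_inv_into {0..<N} e t"
      thus "h x = t" unfolding h_def using e t by (simp add: bij_betw_def f_the_inv_into_f)
    qed
    thus ?thesis by auto
  qed
  have hm: "h \<in> measurable M (count_space T)"
  proof (subst measurable_count_space_eq_countable)
    show "countable T" using T by (simp add: countable_finite)
    show "h \<in> space M \<rightarrow> T \<and> (\<forall>a\<in>T. h -` {a} \<inter> space M \<in> sets M)"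
    proof safe
      fix x assume "x \<in> space M" thus "h x \<in> T" unfolding h_def using e h0(2) by (auto simp: bij_betw_def)
    next
      fix a assume a: "a \<in> T"
      have "h -` {a} \<inter> space M = {x\<in>space M. h0 x = the_inv_into {0..<N} e a}" using pre[OF a] by auto
      also have "\<dots> = h0 -` {the_inv_into {0..<N} e a} \<inter> space M" by auto
      also have "\<dots> \<in> sets M" using h0(1) by (simp add: measurable_count_space_eq2_countable)
      finally show "h -` {a} \<inter> space M \<in> sets M" .
    qed
  qed
  have "measure M {x\<in>space M. h x = t} = 1 / card T" if t: "t \<in> T" for t
  proof -
    have "the_inv_into {0..<N} e t < N" using e t
      by (metis atLeastLessThan_iff bij_betw_def the_inv_into_into order_refl)
    thus ?thesis unfolding pre[OF t] using h0(3) unfolding N_def by simp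
  qed
  thus ?thesis using hm by blast
qed

lemma PiM_pair_uniform:
  fixes M :: "'a measure" and Y :: "'b set" and I :: "'i set"
  assumes M: "prob_space M" and Y: "finite Y" "Y \<noteq> {}" and I: "finite I"
  and F: "F \<in> sets (PiM I (\<lambda>_. M \<Otimes>\<^sub>M uniform_count_measure Y))"
  shows "emeasure (PiM I (\<lambda>_. M \<Otimes>\<^sub>M uniform_count_measure Y)) F =
    (\<integral>\<^sup>+ x. emeasure (uniform_count_measure (PiE I (\<lambda>_. Y)))
        {y \<in> PiE I (\<lambda>_. Y). (\<lambda>i\<in>I. (x i, y i)) \<in> F} \<partial>PiM I (\<lambda>_. M))"
proof -
  define UY where "UY = uniform_count_measure Y"
  define UP where "UP = uniform_count_measure (PiE I (\<lambda>_. Y))"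
  define MI where "MI = PiM I (\<lambda>_. M)"
  define Z where "Z = PiM I (\<lambda>_. M \<Otimes>\<^sub>M UY)"
  define zip :: "('i \<Rightarrow> 'a) \<times> ('i \<Rightarrow> 'b) \<Rightarrow> ('i \<Rightarrow> 'a \<times> 'b)" where "zip p = (\<lambda>i\<in>I. (fst p i, snd p i))" for p
  have finPY: "finite (PiE I (\<lambda>_. Y))" using Y I by (simp add: finite_PiE)
  have nePY: "PiE I (\<lambda>_. Y) \<noteq> {}" using Y by (simp add: PiE_eq_empty_iff)
  interpret UY: prob_space UY unfolding UY_def using Y by (rule prob_space_uniform_count_measure)
  interpret UP: prob_space UP unfolding UP_def using finPY nePY by (rule prob_space_uniform_count_measure)
  interpret MM: prob_space M by fact
  interpret MI: prob_space MI unfolding MI_def using M by (intro prob_space_PiM) auto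
  interpret MY: prob_space "M \<Otimes>\<^sub>M UY" by (intro prob_space_pair) unfold_locales
  interpret PS: product_sigma_finite "\<lambda>_. M \<Otimes>\<^sub>M UY"
    unfolding product_sigma_finite_def by (auto intro: MY.sigma_finite_measure_axioms)
  interpret PM: product_sigma_finite "\<lambda>_. M"
    unfolding product_sigma_finite_def by (auto intro: MM.sigma_finite_measure_axioms)
  have spUP: "space UP = PiE I (\<lambda>_. Y)" unfolding UP_def by (simp add: space_uniform_count_measure)
  have spUY: "space UY = Y" unfolding UY_def by (simp add: space_uniform_count_measure)
  have comp: "(\<lambda>y. y i) \<in> measurable UP UY" if "i \<in> I" for i
  proof -
    have "(\<lambda>y. y i) \<in> measurable (count_space (PiE I (\<lambda>_. Y))) UY"
      using that by (auto simp: measurable_count_space_eq1 spUY)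
    thus ?thesis unfolding UP_def
      using measurable_cong_sets[OF sets_uniform_count_measure_count_space refl, of "PiE I (\<lambda>_. Y)" UY] by simp
  qed
  have zip_meas: "zip \<in> measurable (MI \<Otimes>\<^sub>M UP) Z"
    unfolding zip_def Z_def
  proof (rule measurable_restrict)
    fix i assume i: "i \<in> I"
    show "(\<lambda>p. (fst p i, snd p i)) \<in> measurable (MI \<Otimes>\<^sub>M UP) (M \<Otimes>\<^sub>M UY)"
    proof (rule measurable_Pair)
      show "(\<lambda>p. fst p i) \<in> measurable (MI \<Otimes>\<^sub>M UP) M"
        unfolding MI_def using i by measurable
      show "(\<lambda>p. snd p i) \<in> measurable (MI \<Otimes>\<^sub>M UP) UY"
        using measurable_comp[OF measurable_snd comp[OF i]] by (simp add: o_def)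
    qed
  qed
  define R where "R = distr (MI \<Otimes>\<^sub>M UP) Z zip"
  have slice: "Pair x -` (zip -` G \<inter> space (MI \<Otimes>\<^sub>M UP)) = {y \<in> PiE I (\<lambda>_. Y). zip (x, y) \<in> G}"
    if "x \<in> space MI" for x G
    using that by (auto simp: space_pair_measure spUP)
  have Rmeas: "emeasure R G = (\<integral>\<^sup>+ x. emeasure UP {y \<in> PiE I (\<lambda>_. Y). zip (x, y) \<in> G} \<partial>MI)"
    if G: "G \<in> sets Z" for G
  proof -
    have "emeasure R G = emeasure (MI \<Otimes>\<^sub>M UP) (zip -` G \<inter> space (MI \<Otimes>\<^sub>M UP))"
      unfolding R_def using G zip_meas by (simp add: emeasure_distr)
    also have "\<dots> = (\<integral>\<^sup>+ x. emeasure UP (Pair x -` (zip -` G \<inter> space (MI \<Otimes>\<^sub>M UP))) \<partial>MI)"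
      using G zip_meas by (intro UP.emeasure_pair_measure_alt) (auto intro: measurable_sets)
    also have "\<dots> = (\<integral>\<^sup>+ x. emeasure UP {y \<in> PiE I (\<lambda>_. Y). zip (x, y) \<in> G} \<partial>MI)"
      using slice by (intro nn_integral_cong) presburger
    finally show ?thesis .
  qed
  have "Z = R"
  proof -
    have "R = Z" unfolding Z_def
    proof (rule PS.PiM_eqI[OF I])
      show "sets R = sets (PiM I (\<lambda>_. M \<Otimes>\<^sub>M UY))" unfolding R_def Z_def by simp
      fix A assume A: "\<And>i. i \<in> I \<Longrightarrow> A i \<in> sets (M \<Otimes>\<^sub>M UY)"
      have Asub: "A i \<subseteq> space M \<times> Y" if "i \<in> I" for i
        using sets.sets_into_space[OF A[OF that]] by (simp add: space_pair_measure spUY)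
      have PA: "PiE I A \<in> sets Z" unfolding Z_def using A by (intro sets_PiM_I_finite I) auto
      have pt: "emeasure UP {y \<in> PiE I (\<lambda>_. Y). zip (x, y) \<in> PiE I A} =
                (\<Prod>i\<in>I. emeasure UY (Pair (x i) -` A i))" if x: "x \<in> space MI" for x
      proof -
        have eqs: "{y \<in> PiE I (\<lambda>_. Y). zip (x, y) \<in> PiE I A} = PiE I (\<lambda>i. Pair (x i) -` A i)"
          using Asub unfolding zip_def by (auto simp: PiE_iff extensional_def)
        have sub: "Pair (x i) -` A i \<subseteq> Y" if "i \<in> I" for i using Asub[OF that] by auto
        have "emeasure UP (PiE I (\<lambda>i. Pair (x i) -` A i)) =
              ennreal (card (PiE I (\<lambda>i. Pair (x i) -` A i)) / card (PiE I (\<lambda>_. Y)))"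
        proof -
          have "PiE I (\<lambda>i. Pair (x i) -` A i) \<subseteq> PiE I (\<lambda>_. Y)" using sub by (intro PiE_mono) auto
          thus ?thesis unfolding UP.emeasure_eq_measure unfolding UP_def
            using finPY by (simp add: measure_uniform_count_measure)
        qed
        also have "\<dots> = ennreal (\<Prod>i\<in>I. card (Pair (x i) -` A i) / card Y)"
          using I by (simp add: card_PiE prod_dividef)
        also have "\<dots> = (\<Prod>i\<in>I. ennreal (card (Pair (x i) -` A i) / card Y))"
          by (rule prod_ennreal[symmetric]) auto
        also have "\<dots> = (\<Prod>i\<in>I. emeasure UY (Pair (x i) -` A i))"
          unfolding UY_def using Y sub
          by (intro prod.cong refl) (simp add: emeasure_uniform_count_measure ennreal_of_nat_eq_real_of_nat divide_ennreal)
        finally show ?thesis using eqs by simp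
      qed
      have "emeasure R (PiE I A) = (\<integral>\<^sup>+ x. (\<Prod>i\<in>I. emeasure UY (Pair (x i) -` A i)) \<partial>MI)"
        using Rmeas[OF PA] by (simp add: pt cong: nn_integral_cong)
      also have "\<dots> = (\<Prod>i\<in>I. \<integral>\<^sup>+ x. emeasure UY (Pair x -` A i) \<partial>M)"
        unfolding MI_def using A by (intro PM.product_nn_integral_prod I UY.measurable_emeasure_Pair)
      also have "\<dots> = (\<Prod>i\<in>I. emeasure (M \<Otimes>\<^sub>M UY) (A i))"
        using A by (intro prod.cong refl UY.emeasure_pair_measure_alt[symmetric]) auto
      finally show "emeasure R (PiE I A) = (\<Prod>i\<in>I. emeasure (M \<Otimes>\<^sub>M UY) (A i))" .
    qed
    thus ?thesis by simp
  qed
  hence "emeasure Z F = (\<integral>\<^sup>+ x. emeasure UP {y \<in> PiE I (\<lambda>_. Y). zip (x, y) \<in> F} \<partial>MI)"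
    using Rmeas F unfolding Z_def UY_def by simp
  thus ?thesis unfolding Z_def UY_def UP_def MI_def zip_def by simp
qed

lemma det_law:
  fixes LX :: "'x measure" and K :: nat and g :: "'x \<Rightarrow> nat"
  assumes LX: "prob_space LX" and K: "K \<ge> 2"
    and gm: "g \<in> measurable LX (count_space {1..K})"
    and gk: "\<And>k. k \<in> {1..K} \<Longrightarrow> measure LX {x\<in>space LX. g x = k} = 1 / K"
  defines "L \<equiv> distr LX (obs_space LX K) (\<lambda>x. (x, g x))"
  shows "prob_space L" "sets L = sets (obs_space LX K)" "distr L LX fst = LX"
        "distr L (count_space {1..K}) snd = uniform_count_measure {1..K}" "ETV LX K L = 1"
proof -
  interpret LX: prob_space LX by fact
  have fm: "(\<lambda>x. (x, g x)) \<in> measurable LX (obs_space LX K)"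
    unfolding obs_space_def using gm by measurable
  show PL: "prob_space L" unfolding L_def using fm by (rule LX.prob_space_distr)
  interpret L: prob_space L by fact
  show sL: "sets L = sets (obs_space LX K)" unfolding L_def by simp
  have spL: "space L = space LX \<times> {1..K}" unfolding L_def obs_space_def by (simp add: space_pair_measure)
  have fstm: "fst \<in> measurable (obs_space LX K) LX" unfolding obs_space_def by measurable
  have sndm: "snd \<in> measurable (obs_space LX K) (count_space {1..K})" unfolding obs_space_def by measurable
  show "distr L LX fst = LX" unfolding L_def
    using fm fstm by (subst distr_distr) (auto simp: o_def distr_id)
  have dsnd: "distr L (count_space {1..K}) snd = distr LX (count_space {1..K}) g"
    unfolding L_def using fm sndm by (subst distr_distr) (auto simp: o_def)
  have gpre: "measure LX (g -` A \<inter> space LX) = card A / K" if A: "A \<subseteq> {1..K}" for A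
  proof -
    have "g -` A \<inter> space LX = (\<Union>k\<in>A. {x\<in>space LX. g x = k})" by auto
    moreover have "measure LX (\<Union>k\<in>A. {x\<in>space LX. g x = k}) = (\<Sum>k\<in>A. measure LX {x\<in>space LX. g x = k})"
      using gm A finite_subset[OF A] by (intro LX.finite_measure_finite_Union)
         (auto simp: disjoint_family_on_def measurable_count_space_eq2_countable vimage_def Int_def conj_commute)
    moreover have "(\<Sum>k\<in>A. measure LX {x\<in>space LX. g x = k}) = card A / K"
      using gk A by (subst sum.cong[OF refl, of _ _ "\<lambda>_. 1 / K"]) auto
    ultimately show ?thesis by simp
  qed
  show dU: "distr L (count_space {1..K}) snd = uniform_count_measure {1..K}"
    unfolding dsnd
  proof (rule measure_eqI)
    show "sets (distr LX (count_space {1..K}) g) = sets (uniform_count_measure {1..K})"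
      by (simp add: sets_uniform_count_measure)
    fix A assume "A \<in> sets (distr LX (count_space {1..K}) g)"
    hence A: "A \<subseteq> {1..K}" by simp
    have "emeasure (distr LX (count_space {1..K}) g) A = emeasure LX (g -` A \<inter> space LX)"
      using gm A by (subst emeasure_distr) auto
    also have "\<dots> = ennreal (card A / K)" using gpre[OF A] by (simp add: LX.emeasure_eq_measure)
    also have "\<dots> = emeasure (uniform_count_measure {1..K}) A"
      using A by (simp add: emeasure_uniform_count_measure ennreal_of_nat_eq_real_of_nat divide_ennreal)
    finally show "emeasure (distr LX (count_space {1..K}) g) A = emeasure (uniform_count_measure {1..K}) A" .
  qed
  have msnd: "measure L {w \<in> space L. snd w = k} = 1 / K" if k: "k \<in> {1..K}" for k
  proof -
    have "measure L {w \<in> space L. snd w = k} = measure (distr L (count_space {1..K}) snd) {k}"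
      using sndm sL k by (subst measure_distr) (auto simp: measurable_cong_sets vimage_def Int_def conj_commute)
    also have "\<dots> = 1 / K" unfolding dU using k by (simp add: measure_uniform_count_measure)
    finally show ?thesis .
  qed
  define Fs where "Fs = vimage_algebra (space L) fst LX"
  have fstL: "fst \<in> measurable L LX" using fstm by (subst measurable_cong_sets[OF sL refl])
  have subalg: "subalgebra L Fs" unfolding subalgebra_def Fs_def
    using sets_image_in_sets[OF refl fstL] by simp
  interpret FS: finite_measure_subalgebra L Fs
    by (intro finite_measure_subalgebra.intro finite_measure_subalgebra_axioms.intro L.finite_measure_axioms subalg)
  have ae_snd: "AE z in L. snd z = g (fst z)"
  proof -
    have Pm: "{z \<in> space (obs_space LX K). snd z = g (fst z)} \<in> sets (obs_space LX K)"
    proof -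
      have eq: "{z \<in> space (obs_space LX K). snd z = g (fst z)} = (\<Union>k\<in>{1..K}. {x\<in>space LX. g x = k} \<times> {k})"
        using gm unfolding obs_space_def by (auto simp: space_pair_measure measurable_def)
      have "{x\<in>space LX. g x = k} \<in> sets LX" if "k \<in> {1..K}" for k
      proof -
        have "g -` {k} \<inter> space LX \<in> sets LX" using gm that by (simp add: measurable_count_space_eq2_countable)
        moreover have "g -` {k} \<inter> space LX = {x\<in>space LX. g x = k}" by auto
        ultimately show ?thesis by simp
      qed
      thus ?thesis unfolding eq unfolding obs_space_def by (intro sets.finite_UN pair_measureI) auto
    qed
    show ?thesis unfolding L_def by (subst AE_distr_iff[OF fm Pm]) simp
  qed
  have ce: "AE z in L. cond_prob_Y LX L k z = (if snd z = k then 1 else 0)" for k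
  proof -
    define f1 where "f1 = (\<lambda>z::'x\<times>nat. if snd z = k then 1 else (0::real))"
    define f2 where "f2 = (\<lambda>z::'x\<times>nat. if g (fst z) = k then 1 else (0::real))"
    have f1m: "f1 \<in> borel_measurable L" unfolding f1_def 
      by (subst measurable_cong_sets[OF sL refl]) (unfold obs_space_def, measurable)
    have gfm: "(\<lambda>x. if g x = k then 1 else (0::real)) \<in> borel_measurable LX"
      using gm by measurable
    have f2F: "f2 \<in> borel_measurable Fs" unfolding f2_def Fs_def
      using measurable_comp[OF measurable_vimage_algebra1[of fst "space L" LX] gfm]
      using fstL by (auto simp: o_def measurable_def)
    have f2m: "f2 \<in> borel_measurable L" using measurable_from_subalg[OF subalg f2F] .
    have ae12: "AE z in L. f1 z = f2 z" using ae_snd unfolding f1_def f2_def by (rule AE_mp) (auto intro: AE_I2)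
    have int2: "integrable L f2"
      using f2m by (intro L.integrable_const_bound[of _ 1]) (auto simp: f2_def)
    have "AE z in L. real_cond_exp L Fs f1 z = real_cond_exp L Fs f2 z"
      by (rule FS.real_cond_exp_cong[OF ae12 f1m f2m])
    moreover have "AE z in L. real_cond_exp L Fs f2 z = f2 z"
      by (rule FS.real_cond_exp_F_meas[OF int2 f2F])
    ultimately have "AE z in L. real_cond_exp L Fs f1 z = f1 z" using ae12 by eventually_elim auto
    thus ?thesis unfolding cond_prob_Y_def Fs_def f1_def by simp
  qed
  have aeall: "AE z in L. \<forall>k\<in>{1..K}. cond_prob_Y LX L k z = (if snd z = k then 1 else 0)"
    by (intro AE_finite_allI ce) auto
  define c where "c = (\<lambda>z::'x\<times>nat. (1/2) * (\<Sum>k\<in>{1..K}. \<bar>cond_prob_Y LX L k z - measure L {w \<in> space L. snd w = k}\<bar>))"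
  have cm: "c \<in> borel_measurable L" unfolding c_def cond_prob_Y_def
    by (intro borel_measurable_times borel_measurable_const borel_measurable_sum borel_measurable_abs
          borel_measurable_diff borel_measurable_cond_exp2)
  have pt: "(1/2) * (\<Sum>k\<in>{1..K}. \<bar>(if j = k then 1 else 0) - 1 / real K\<bar>) = 1 - 1 / K"
    if j: "j \<in> {1..K}" for j
  proof -
    have "(\<Sum>k\<in>{1..K}. \<bar>(if j = k then 1 else 0) - 1 / real K\<bar>) =
          \<bar>1 - 1 / real K\<bar> + (\<Sum>k\<in>{1..K} - {j}. \<bar>(if j = k then 1 else 0) - 1 / real K\<bar>)"
      using j by (subst sum.remove[of _ j]) auto
    also have "(\<Sum>k\<in>{1..K} - {j}. \<bar>(if j = k then 1 else 0) - 1 / real K\<bar>) = (\<Sum>k\<in>{1..K} - {j}. 1 / real K)"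
      by (intro sum.cong) auto
    also have "\<dots> = (K - 1) / K" using j by (simp add: of_nat_diff)
    also have "\<bar>1 - 1 / real K\<bar> = 1 - 1 / K" using K by simp
    finally have S: "(\<Sum>k\<in>{1..K}. \<bar>(if j = k then 1 else 0) - 1 / real K\<bar>) = (1 - 1 / K) + real (K - 1) / K" .
    have "real (K - 1) = real K - 1" using K by simp
    hence "(1 - 1 / K) + real (K - 1) / K = 2 * (1 - 1 / real K)" using K by (simp add: field_simps)
    thus ?thesis using S by simp
  qed
  have "integral\<^sup>L L c = integral\<^sup>L L (\<lambda>_. 1 - 1 / real K)"
  proof (rule integral_cong_AE[OF cm])
    show "(\<lambda>_. 1 - 1 / real K) \<in> borel_measurable L" by simp
    show "AE z in L. c z = 1 - 1 / real K"
      using aeall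
    proof (rule AE_mp, intro AE_I2 impI)
      fix z assume z: "z \<in> space L" and a: "\<forall>k\<in>{1..K}. cond_prob_Y LX L k z = (if snd z = k then 1 else 0)"
      have zj: "snd z \<in> {1..K}" using z spL by auto
      have "c z = (1/2) * (\<Sum>k\<in>{1..K}. \<bar>(if snd z = k then 1 else 0) - 1 / real K\<bar>)"
        unfolding c_def using a msnd by (intro arg_cong2[where f="(*)"] sum.cong refl) auto
      thus "c z = 1 - 1 / real K" using pt[OF zj] by simp
    qed
  qed
  also have "\<dots> = 1 - 1 / K" by (simp add: L.prob_space)
  finally have ic: "integral\<^sup>L L c = 1 - 1 / K" .
  show "ETV LX K L = 1" unfolding ETV_def using ic K unfolding c_def by (simp add: field_simps)
qed

definition lab :: "nat \<Rightarrow> nat \<Rightarrow> nat \<Rightarrow> nat" where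
  "lab K c t = (if c + t < K then c + t else c + t - K) + 1"

definition tsol :: "nat \<Rightarrow> nat \<Rightarrow> nat \<Rightarrow> nat" where
  "tsol K c y = (if c < y then y - 1 - c else y - 1 + K - c)"

lemma lab_iff: "c < K \<Longrightarrow> t < K \<Longrightarrow> y \<in> {1..K} \<Longrightarrow> lab K c t = y \<longleftrightarrow> t = tsol K c y"
  unfolding lab_def tsol_def by auto

lemma lab_iff2: "c < K \<Longrightarrow> t < K \<Longrightarrow> y \<in> {1..K} \<Longrightarrow> lab K c t = y \<longleftrightarrow> c = tsol K t y"
  unfolding lab_def tsol_def by auto

lemma tsol_lt: "c < K \<Longrightarrow> y \<in> {1..K} \<Longrightarrow> tsol K c y < K"
  unfolding tsol_def by auto

lemma lab_range: "c < K \<Longrightarrow> t < K \<Longrightarrow> lab K c t \<in> {1..K}"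
  unfolding lab_def by auto

lemma count_fibre:
  fixes \<beta> :: "'i \<Rightarrow> nat" and t :: "'i \<Rightarrow> nat" and I :: "'i set"
  assumes I: "finite I" and inj: "inj_on \<beta> I" and rng: "\<beta> ` I \<subseteq> {..<m}" and t: "\<forall>i\<in>I. t i < K"
  shows "card {s \<in> PiE {..<m} (\<lambda>_. {..<K}). \<forall>i\<in>I. s (\<beta> i) = t i} = K ^ (m - card I)"
proof -
  define iv where "iv = the_inv_into I \<beta>"
  have iv: "iv (\<beta> i) = i" if "i \<in> I" for i unfolding iv_def using inj that by (rule the_inv_into_f_f)
  define B where "B = (\<lambda>b. if b \<in> \<beta> ` I then {t (iv b)} else {..<K})"
  have eq: "{s \<in> PiE {..<m} (\<lambda>_. {..<K}). \<forall>i\<in>I. s (\<beta> i) = t i} = PiE {..<m} B"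
  proof (intro equalityI subsetI)
    fix s assume "s \<in> {s \<in> PiE {..<m} (\<lambda>_. {..<K}). \<forall>i\<in>I. s (\<beta> i) = t i}"
    thus "s \<in> PiE {..<m} B" unfolding B_def using iv by (auto simp: PiE_iff)
  next
    fix s assume s: "s \<in> PiE {..<m} B"
    have "s b \<in> {..<K}" if "b < m" for b
    proof (cases "b \<in> \<beta> ` I")
      case True
      then obtain i where i: "i \<in> I" "b = \<beta> i" by auto
      have "s b \<in> B b" using s that by (auto simp: PiE_iff)
      hence "s b = t (iv b)" using True unfolding B_def by simp
      thus ?thesis using i iv t by auto
    next
      case False
      have "s b \<in> B b" using s that by (auto simp: PiE_iff)
      thus ?thesis using False unfolding B_def by simp
    qed
    moreover have "s (\<beta> i) = t i" if "i \<in> I" for i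
    proof -
      have "s (\<beta> i) \<in> B (\<beta> i)" using s that rng by (auto simp: PiE_iff)
      thus ?thesis using that iv unfolding B_def by simp
    qed
    ultimately show "s \<in> {s \<in> PiE {..<m} (\<lambda>_. {..<K}). \<forall>i\<in>I. s (\<beta> i) = t i}"
      using s by (auto simp: PiE_iff)
  qed
  have "card (PiE {..<m} B) = (\<Prod>b<m. card (B b))" by (simp add: card_PiE)
  also have "\<dots> = (\<Prod>b<m. if b \<in> \<beta> ` I then 1 else K)"
    unfolding B_def by (intro prod.cong) auto
  also have "\<dots> = (\<Prod>b\<in>{..<m} \<inter> - (\<beta> ` I). K)"
    by (subst prod.If_cases) auto
  also have "\<dots> = K ^ card ({..<m} - \<beta> ` I)" by (simp add: Diff_eq)
  also have "card ({..<m} - \<beta> ` I) = m - card I"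
    using rng card_image[OF inj] by (subst card_Diff_subset) (auto intro: finite_subset)
  finally show ?thesis using eq by simp
qed

theorem theorem3:
  fixes K n :: nat and \<alpha> :: real
    and LX :: "'x measure"
    and C :: "(nat \<Rightarrow> 'x \<times> nat) \<Rightarrow> real"
  assumes K: "K \<ge> 2" and n: "n \<ge> 1" and alpha: "0 < \<alpha>" "\<alpha> < 1"
    and LX_prob: "prob_space LX" and LX_atomless: "atomless LX"
    and C_meas: "C \<in> borel_measurable (PiM {..<n} (\<lambda>_. obs_space LX K))"
    and valid: "\<And>L. prob_space L \<Longrightarrow> sets L = sets (obs_space LX K) \<Longrightarrow>
                   distr L LX fst = LX \<Longrightarrow>
                   distr L (count_space {1..K}) snd = uniform_count_measure {1..K} \<Longrightarrow>
                   measure (PiM {..<n} (\<lambda>_. L))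
                     {\<omega> \<in> space (PiM {..<n} (\<lambda>_. L)). C \<omega> \<ge> ETV LX K L} \<ge> 1 - \<alpha>"
  shows "measure (PiM {..<n} (\<lambda>_. LX \<Otimes>\<^sub>M uniform_count_measure {1..K}))
           {\<omega> \<in> space (PiM {..<n} (\<lambda>_. LX \<Otimes>\<^sub>M uniform_count_measure {1..K})). C \<omega> \<ge> 1}
         \<ge> 1 - \<alpha>"
proof -
  interpret LX: prob_space LX by fact
  have Kpos: "K > 0" using K by simp
  define OBS where "OBS = obs_space LX K"
  define P0 where "P0 = PiM {..<n} (\<lambda>_. LX \<Otimes>\<^sub>M uniform_count_measure {1..K})"
  define MI where "MI = PiM {..<n} (\<lambda>_::nat. LX)"
  define PO where "PO = PiM {..<n} (\<lambda>_::nat. OBS)"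
  have sLU: "sets (LX \<Otimes>\<^sub>M uniform_count_measure {1..K}) = sets OBS"
    unfolding OBS_def obs_space_def
    by (intro sets_pair_measure_cong refl sets_uniform_count_measure_count_space)
  have sP0: "sets P0 = sets PO" unfolding P0_def PO_def by (intro sets_PiM_cong refl sLU)
  have Cm: "C \<in> borel_measurable P0"
    using C_meas unfolding PO_def OBS_def by (subst measurable_cong_sets[OF sP0 refl]) (simp add: PO_def OBS_def)
  interpret UK: prob_space "uniform_count_measure {1..K}"
    using Kpos by (intro prob_space_uniform_count_measure) auto
  interpret LU: prob_space "LX \<Otimes>\<^sub>M uniform_count_measure {1..K}"
    by (intro prob_space_pair) unfold_locales
  interpret P0: prob_space P0 unfolding P0_def by (intro prob_space_PiM LU.prob_space_axioms)
  interpret MI: prob_space MI unfolding MI_def by (intro prob_space_PiM LX_prob)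
  define F where "F = {\<omega>\<in>space P0. C \<omega> < 1}"
  have Fs: "F \<in> sets P0" unfolding F_def using Cm by measurable
  have Gc: "{\<omega>\<in>space P0. 1 \<le> C \<omega>} = space P0 - F" unfolding F_def by auto

  have bound: "measure P0 F \<le> \<alpha> + real n ^ 2 / real m" if m: "m \<ge> 1" for m :: nat
  proof -
    define T where "T = {..<m} \<times> {..<K}"
    have Tfin: "finite T" "T \<noteq> {}" "card T = m * K" using m Kpos unfolding T_def by (auto simp: lessThan_empty_iff)
    obtain hT where hT: "hT \<in> measurable LX (count_space T)"
        "\<forall>t\<in>T. measure LX {x\<in>space LX. hT x = t} = 1 / card T"
      using atomless_partition_set[OF LX_prob LX_atomless Tfin(1,2)] by blast
    have hTr: "hT x \<in> T" if "x \<in> space LX" for x using measurable_space[OF hT(1) that] by simp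
    have hTs: "{x\<in>space LX. hT x \<in> A} \<in> sets LX" for A
    proof -
      have "hT -` (A \<inter> T) \<inter> space LX \<in> sets LX" using hT(1) by (intro measurable_sets) auto
      moreover have "hT -` (A \<inter> T) \<inter> space LX = {x\<in>space LX. hT x \<in> A}" using hTr by auto
      ultimately show ?thesis by simp
    qed
    have hTs1: "{x\<in>space LX. hT x = t} \<in> sets LX" for t using hTs[of "{t}"] by simp
    have hTm: "measure LX {x\<in>space LX. hT x = t} = 1 / (real m * real K)" if "t \<in> T" for t
      using hT(2) that Tfin(3) by simp
    define b where "b x = fst (hT x)" for x
    define c where "c x = snd (hT x)" for x
    have bc: "b x < m" "c x < K" if "x \<in> space LX" for x using hTr[OF that] unfolding b_def c_def T_def by auto
    define S where "S = PiE {..<m} (\<lambda>_::nat. {..<K})"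
    have Sfin: "finite S" "card S = K ^ m" unfolding S_def by (auto simp: finite_PiE card_PiE)
    have Sv: "s \<beta> < K" if "s \<in> S" "\<beta> < m" for s \<beta> using that unfolding S_def by (auto simp: PiE_iff)
    define g where "g s x = lab K (c x) (s (b x))" for s x
    have gm: "g s \<in> measurable LX (count_space {1..K})" if s: "s \<in> S" for s
    proof -
      have "(\<lambda>p. lab K (snd p) (s (fst p))) \<in> measurable (count_space T) (count_space {1..K})"
      proof (subst measurable_count_space_eq1, rule Pi_I)
        fix p assume "p \<in> T"
        hence "snd p < K" "s (fst p) < K" using Sv[OF s] unfolding T_def by auto
        thus "lab K (snd p) (s (fst p)) \<in> space (count_space {1..K})" using lab_range by simp
      qed
      from measurable_comp[OF hT(1) this] show ?thesis unfolding g_def b_def c_def o_def .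
    qed
    have gY: "1 \<le> g s x \<and> g s x \<le> K" if "s \<in> S" "x \<in> space LX" for s x
      using lab_range[OF bc(2)[OF that(2)] Sv[OF that(1) bc(1)[OF that(2)]]] unfolding g_def by simp
    have gk: "measure LX {x\<in>space LX. g s x = k} = 1 / K" if s: "s \<in> S" and k: "k \<in> {1..K}" for s k
    proof -
      have eq: "{x\<in>space LX. g s x = k} = (\<Union>\<beta>\<in>{..<m}. {x\<in>space LX. hT x = (\<beta>, tsol K (s \<beta>) k)})"
      proof (intro equalityI subsetI)
        fix x assume x: "x \<in> {x\<in>space LX. g s x = k}"
        have xs: "x \<in> space LX" using x by simp
        have sb: "s (b x) < K" using Sv[OF s bc(1)[OF xs]] .
        have "c x = tsol K (s (b x)) k" using x lab_iff2[OF bc(2)[OF xs] sb k] unfolding g_def by auto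
        hence "hT x = (b x, tsol K (s (b x)) k)" unfolding b_def c_def by (simp add: prod_eq_iff)
        thus "x \<in> (\<Union>\<beta>\<in>{..<m}. {x\<in>space LX. hT x = (\<beta>, tsol K (s \<beta>) k)})" using xs bc(1)[OF xs] by auto
      next
        fix x assume "x \<in> (\<Union>\<beta>\<in>{..<m}. {x\<in>space LX. hT x = (\<beta>, tsol K (s \<beta>) k)})"
        then obtain \<beta> where \<beta>: "\<beta> < m" "x \<in> space LX" "hT x = (\<beta>, tsol K (s \<beta>) k)" by auto
        have bx: "b x = \<beta>" "c x = tsol K (s \<beta>) k" using \<beta> unfolding b_def c_def by auto
        have "g s x = k" unfolding g_def bx(1) using lab_iff2[OF bc(2)[OF \<beta>(2)] Sv[OF s \<beta>(1)] k] bx(2) by simp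
        thus "x \<in> {x\<in>space LX. g s x = k}" using \<beta> by auto
      qed
      have "measure LX (\<Union>\<beta>\<in>{..<m}. {x\<in>space LX. hT x = (\<beta>, tsol K (s \<beta>) k)}) =
            (\<Sum>\<beta>\<in>{..<m}. measure LX {x\<in>space LX. hT x = (\<beta>, tsol K (s \<beta>) k)})"
        by (intro LX.finite_measure_finite_Union) (auto simp: disjoint_family_on_def hTs1)
      also have "\<dots> = (\<Sum>\<beta>\<in>{..<m}. 1 / (real m * real K))"
        using Sv[OF s] tsol_lt[OF _ k] by (intro sum.cong refl hTm) (auto simp: T_def)
      also have "\<dots> = 1 / K" using m by simp
      finally show ?thesis using eq by simp
    qed
    define L where "L s = distr LX OBS (\<lambda>x. (x, g s x))" for s
    note DL = det_law[OF LX_prob K gm gk, folded OBS_def, folded L_def]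
    have fm: "(\<lambda>x. (x, g s x)) \<in> measurable LX (LX \<Otimes>\<^sub>M uniform_count_measure {1..K})" if s: "s \<in> S" for s
    proof -
      have "(\<lambda>x. (x, g s x)) \<in> measurable LX OBS" unfolding OBS_def obs_space_def using gm[OF s] by measurable
      thus ?thesis by (subst measurable_cong_sets[OF refl sLU])
    qed
    define \<Phi> where "\<Phi> s = (\<lambda>x. \<lambda>i\<in>{..<n}. (x i, g s (x i)))" for s
    have \<Phi>c: "\<Phi> s = compose {..<n} (\<lambda>x. (x, g s x))" for s
      unfolding \<Phi>_def compose_def by (simp add: fun_eq_iff)
    have \<Phi>m: "\<Phi> s \<in> measurable MI P0" if s: "s \<in> S" for s
      unfolding \<Phi>_def MI_def P0_def
    proof (rule measurable_restrict)
      fix i assume i: "i \<in> {..<n}"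
      show "(\<lambda>x. (x i, g s (x i))) \<in> measurable (PiM {..<n} (\<lambda>_. LX)) (LX \<Otimes>\<^sub>M uniform_count_measure {1..K})"
        using measurable_compose[OF measurable_component_singleton[OF i, of "\<lambda>_. LX"] fm[OF s]] .
    qed
    have PiL: "PiM {..<n} (\<lambda>_. L s) = distr MI P0 (\<Phi> s)" if s: "s \<in> S" for s
    proof -
      have "distr MI P0 (\<Phi> s) = PiM {..<n} (\<lambda>_. distr LX (LX \<Otimes>\<^sub>M uniform_count_measure {1..K}) (\<lambda>x. (x, g s x)))"
        unfolding \<Phi>c MI_def P0_def
        by (rule distr_PiM_finite_prob_space') (simp, rule LX_prob, rule LU.prob_space_axioms, rule fm[OF s])
      also have "\<dots> = PiM {..<n} (\<lambda>_. L s)"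
        unfolding L_def by (intro PiM_cong refl distr_cong sLU)
      finally show ?thesis by simp
    qed
    have Lbound: "emeasure (distr MI P0 (\<Phi> s)) F \<le> ennreal \<alpha>" if s: "s \<in> S" for s
    proof -
      interpret D: prob_space "distr MI P0 (\<Phi> s)" by (intro MI.prob_space_distr \<Phi>m s)
      have "1 - \<alpha> \<le> measure (PiM {..<n} (\<lambda>_. L s)) {\<omega> \<in> space (PiM {..<n} (\<lambda>_. L s)). C \<omega> \<ge> ETV LX K (L s)}"
        using s by (intro valid DL(1,3,4) DL(2)[unfolded OBS_def]) auto
      also have "\<dots> = measure (distr MI P0 (\<Phi> s)) (space P0 - F)"
      proof -
        have E1: "ETV LX K (L s) = 1" using DL(5) s by blast
        show ?thesis unfolding PiL[OF s] E1 Gc[symmetric] by simp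
      qed
      also have "\<dots> = 1 - measure (distr MI P0 (\<Phi> s)) F"
        using Fs by (subst D.prob_compl[symmetric]) auto
      finally have "measure (distr MI P0 (\<Phi> s)) F \<le> \<alpha>" by simp
      thus ?thesis by (simp add: D.emeasure_eq_measure ennreal_leI)
    qed
    have intL: "(\<integral>\<^sup>+x. indicator F (\<Phi> s x) \<partial>MI) = emeasure (distr MI P0 (\<Phi> s)) F" if s: "s \<in> S" for s
    proof -
      have "emeasure (distr MI P0 (\<Phi> s)) F = (\<integral>\<^sup>+x. indicator F x \<partial>distr MI P0 (\<Phi> s))"
        using Fs by (intro nn_integral_indicator[symmetric]) simp
      also have "\<dots> = (\<integral>\<^sup>+x. indicator F (\<Phi> s x) \<partial>MI)"
        using Fs by (intro nn_integral_distr \<Phi>m s) simp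
      finally show ?thesis by simp
    qed
    define Bs where "Bs \<beta> = {x\<in>space LX. b x = \<beta>}" for \<beta>
    have Bss: "Bs \<beta> \<in> sets LX" for \<beta> using hTs[of "{p. fst p = \<beta>}"] unfolding Bs_def b_def by simp
    have Bsm: "measure LX (Bs \<beta>) = 1 / real m" if \<beta>: "\<beta> < m" for \<beta>
    proof -
      have "Bs \<beta> = (\<Union>r\<in>{..<K}. {x\<in>space LX. hT x = (\<beta>, r)})"
        unfolding Bs_def b_def using bc(2) unfolding c_def by (auto simp: prod_eq_iff)
      moreover have "measure LX (\<Union>r\<in>{..<K}. {x\<in>space LX. hT x = (\<beta>, r)}) =
            (\<Sum>r\<in>{..<K}. measure LX {x\<in>space LX. hT x = (\<beta>, r)})"
        by (intro LX.finite_measure_finite_Union) (auto simp: disjoint_family_on_def hTs1)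
      moreover have "(\<Sum>r\<in>{..<K}. measure LX {x\<in>space LX. hT x = (\<beta>, r)}) = (\<Sum>r\<in>{..<K}. 1 / (real m * real K))"
        using \<beta> by (intro sum.cong refl hTm) (auto simp: T_def)
      moreover have "(\<Sum>r\<in>{..<K}. 1 / (real m * real K)) = 1 / real m" using Kpos by simp
      ultimately show ?thesis by simp
    qed
    define OD where "OD = {p \<in> {..<n} \<times> {..<n}. fst p \<noteq> snd p}"
    have ODfin: "finite OD" unfolding OD_def by auto
    have ODcard: "card OD \<le> n * n"
    proof -
      have "card OD \<le> card ({..<n} \<times> {..<n})" unfolding OD_def by (intro card_mono) auto
      thus ?thesis by (simp add: card_cartesian_product)
    qed
    define E where "E p \<beta> = prod_emb {..<n} (\<lambda>_. LX) {fst p, snd p} (PiE {fst p, snd p} (\<lambda>_. Bs \<beta>))" for p \<beta>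
    define Dc where "Dc = (\<Union>p\<in>OD. \<Union>\<beta>\<in>{..<m}. E p \<beta>)"
    have Es: "E p \<beta> \<in> sets MI" if "p \<in> OD" for p \<beta>
      unfolding E_def MI_def using that Bss by (intro sets_PiM_I) (auto simp: OD_def)
    have Dcs: "Dc \<in> sets MI" unfolding Dc_def using Es ODfin by (intro sets.finite_UN) auto
    interpret PP: product_prob_space "\<lambda>_::nat. LX" "{..<n}"
      by (intro product_prob_spaceI LX_prob)
    have Em: "measure MI (E p \<beta>) = (1 / real m) ^ 2" if p: "p \<in> OD" and \<beta>: "\<beta> < m" for p \<beta>
    proof -
      have "measure MI (E p \<beta>) = (\<Prod>i\<in>{fst p, snd p}. measure LX (Bs \<beta>))"
        unfolding E_def MI_def using p Bss by (intro PP.measure_PiM_emb) (auto simp: OD_def)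
      also have "\<dots> = (1 / real m) ^ 2" using p Bsm[OF \<beta>] by (simp add: OD_def power2_eq_square)
      finally show ?thesis .
    qed
    have Dm: "measure MI Dc \<le> real n ^ 2 / real m"
    proof -
      have "measure MI Dc \<le> (\<Sum>p\<in>OD. measure MI (\<Union>\<beta>\<in>{..<m}. E p \<beta>))"
        unfolding Dc_def using Es ODfin by (intro measure_UNION_le) auto
      also have "\<dots> \<le> (\<Sum>p\<in>OD. \<Sum>\<beta>\<in>{..<m}. measure MI (E p \<beta>))"
        using Es by (intro sum_mono measure_UNION_le) auto
      also have "\<dots> = (\<Sum>p\<in>OD. \<Sum>\<beta>\<in>{..<m}. (1 / real m) ^ 2)"
        using Em by (intro sum.cong refl) auto
      also have "\<dots> = real (card OD) / real m" using m by (simp add: power2_eq_square)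
      also have "\<dots> \<le> real (n * n) / real m" using ODcard m by (intro divide_right_mono) (simp only: of_nat_le_iff, simp)
      finally show ?thesis by (simp add: power2_eq_square)
    qed
    have xsp: "x i \<in> space LX" if "x \<in> space MI" "i < n" for x i
      using that unfolding MI_def by (auto simp: space_PiM PiE_iff)
    have injb: "inj_on (\<lambda>i. b (x i)) {..<n}" if x: "x \<in> space MI" and nD: "x \<notin> Dc" for x
    proof (rule inj_onI, rule ccontr)
      fix i j assume ij: "i \<in> {..<n}" "j \<in> {..<n}" "b (x i) = b (x j)" "i \<noteq> j"
      define \<beta> where "\<beta> = b (x i)"
      have \<beta>m: "\<beta> < m" unfolding \<beta>_def using bc(1) xsp[OF x] ij by auto
      have "x \<in> E (i, j) \<beta>"
        unfolding E_def using x ij xsp[OF x] unfolding MI_def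
        by (auto simp: prod_emb_iff space_PiM PiE_iff Bs_def \<beta>_def)
      moreover have "(i, j) \<in> OD" using ij unfolding OD_def by auto
      ultimately have "x \<in> Dc" unfolding Dc_def using \<beta>m by blast
      thus False using nD by simp
    qed
    define UP where "UP = uniform_count_measure (PiE {..<n} (\<lambda>_::nat. {1..K}))"
    have finPY: "finite (PiE {..<n} (\<lambda>_::nat. {1..K}))" by (simp add: finite_PiE)
    have cardPY: "card (PiE {..<n} (\<lambda>_::nat. {1..K})) = K ^ n" by (simp add: card_PiE)
    interpret UP: prob_space UP unfolding UP_def
      using finPY Kpos by (intro prob_space_uniform_count_measure) (auto simp: PiE_eq_empty_iff)
    have pw: "emeasure UP {y\<in>PiE {..<n} (\<lambda>_. {1..K}). (\<lambda>i\<in>{..<n}. (x i, y i)) \<in> F}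
              \<le> ennreal (1 / real K ^ m) * of_nat (card {s\<in>S. \<Phi> s x \<in> F}) + indicator Dc x"
      if x: "x \<in> space MI" for x
    proof (cases "x \<in> Dc")
      case True
      have "emeasure UP {y\<in>PiE {..<n} (\<lambda>_. {1..K}). (\<lambda>i\<in>{..<n}. (x i, y i)) \<in> F} \<le> 1" by (rule UP.emeasure_le_1)
      also have "\<dots> \<le> ennreal (1 / real K ^ m) * of_nat (card {s\<in>S. \<Phi> s x \<in> F}) + indicator Dc x"
        using True by simp
      finally show ?thesis .
    next
      case False
      define A where "A = {y\<in>PiE {..<n} (\<lambda>_. {1..K}). (\<lambda>i\<in>{..<n}. (x i, y i)) \<in> F}"
      have Afin: "finite A" unfolding A_def using finPY by simp
      have inj: "inj_on (\<lambda>i. b (x i)) {..<n}" using injb[OF x False] .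
      have nm: "n \<le> m"
      proof -
        have "card {..<n} \<le> card {..<m}"
          using inj bc(1) xsp[OF x] by (intro card_inj_on_le) auto
        thus ?thesis by simp
      qed
      have LHS: "emeasure UP A = ennreal (real (card A) / real K ^ n)"
      proof -
        have "A \<subseteq> PiE {..<n} (\<lambda>_. {1..K})" unfolding A_def by auto
        hence "measure UP A = real (card A) / real K ^ n"
          unfolding UP_def using finPY cardPY by (simp add: measure_uniform_count_measure)
        thus ?thesis by (simp add: UP.emeasure_eq_measure)
      qed
      define fib where "fib y = {s\<in>S. \<forall>i\<in>{..<n}. s (b (x i)) = tsol K (c (x i)) (y i)}" for y
      have gx: "g s (x i) = y i \<longleftrightarrow> s (b (x i)) = tsol K (c (x i)) (y i)"
        if "s \<in> S" "i < n" "y i \<in> {1..K}" for s y i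
        unfolding g_def using that by (intro lab_iff bc xsp[OF x] Sv) auto
      have fibeq: "{s\<in>S. \<Phi> s x \<in> F} = (\<Union>y\<in>A. fib y)"
      proof (intro equalityI subsetI)
        fix s assume s: "s \<in> {s\<in>S. \<Phi> s x \<in> F}"
        define y where "y = (\<lambda>i\<in>{..<n}. g s (x i))"
        have yP: "y \<in> PiE {..<n} (\<lambda>_. {1..K})"
          unfolding y_def using s gY xsp[OF x] by (auto simp: PiE_iff)
        have "\<Phi> s x = (\<lambda>i\<in>{..<n}. (x i, y i))" unfolding \<Phi>_def y_def by (simp add: fun_eq_iff)
        hence "y \<in> A" unfolding A_def using s yP by auto
        moreover have "s \<in> fib y"
        proof -
          have "s (b (x i)) = tsol K (c (x i)) (y i)" if i: "i < n" for i
          proof -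
            have "y i \<in> {1..K}" using yP i by (auto simp: PiE_iff)
            moreover have "g s (x i) = y i" using i unfolding y_def by simp
            ultimately show ?thesis using gx[of s i y] s i by blast
          qed
          thus ?thesis unfolding fib_def using s by auto
        qed
        ultimately show "s \<in> (\<Union>y\<in>A. fib y)" by blast
      next
        fix s assume "s \<in> (\<Union>y\<in>A. fib y)"
        then obtain y where y: "y \<in> A" "s \<in> fib y" by auto
        have s: "s \<in> S" using y unfolding fib_def by auto
        have yP: "y \<in> PiE {..<n} (\<lambda>_. {1..K})" using y unfolding A_def by auto
        have "g s (x i) = y i" if "i < n" for i
          using gx[OF s that] y yP that unfolding fib_def by (auto simp: PiE_iff)
        hence "\<Phi> s x = (\<lambda>i\<in>{..<n}. (x i, y i))" unfolding \<Phi>_def by (simp add: fun_eq_iff)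
        thus "s \<in> {s\<in>S. \<Phi> s x \<in> F}" using y s unfolding A_def by auto
      qed
      have fibcard: "card (fib y) = K ^ (m - n)" if y: "y \<in> A" for y
      proof -
        have yP: "y \<in> PiE {..<n} (\<lambda>_. {1..K})" using y unfolding A_def by auto
        have "card (fib y) = K ^ (m - card {..<n})"
          unfolding fib_def S_def
          using yP bc xsp[OF x] inj by (intro count_fibre) (auto intro!: tsol_lt simp: PiE_iff)
        thus ?thesis by simp
      qed
      have fibdisj: "fib y \<inter> fib y' = {}" if "y \<in> A" "y' \<in> A" "y \<noteq> y'" for y y'
      proof (rule ccontr)
        assume "fib y \<inter> fib y' \<noteq> {}"
        then obtain s where s: "s \<in> fib y" "s \<in> fib y'" by auto
        have sS: "s \<in> S" using s unfolding fib_def by auto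
        have yP: "y \<in> PiE {..<n} (\<lambda>_. {1..K})" "y' \<in> PiE {..<n} (\<lambda>_. {1..K})" using that unfolding A_def by auto
        have "y i = y' i" for i
        proof (cases "i < n")
          case True
          have "g s (x i) = y i" using gx[OF sS True] s yP True unfolding fib_def by (auto simp: PiE_iff)
          moreover have "g s (x i) = y' i" using gx[OF sS True] s yP True unfolding fib_def by (auto simp: PiE_iff)
          ultimately show ?thesis by simp
        next
          case False thus ?thesis using yP by (auto simp: PiE_iff extensional_def)
        qed
        thus False using that by (simp add: fun_eq_iff)
      qed
      have "card {s\<in>S. \<Phi> s x \<in> F} = (\<Sum>y\<in>A. card (fib y))"
        unfolding fibeq using Afin fibdisj Sfin(1) unfolding fib_def
        by (intro card_UN_disjoint) auto
      also have "\<dots> = card A * K ^ (m - n)" using fibcard by simp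
      finally have cardF: "card {s\<in>S. \<Phi> s x \<in> F} = card A * K ^ (m - n)" .
      have "real (card A) / real K ^ n = 1 / real K ^ m * real (card A * K ^ (m - n))"
      proof -
        have "real K ^ m = real K ^ (m - n) * real K ^ n" using nm by (simp add: power_add[symmetric])
        thus ?thesis using Kpos by (simp add: field_simps)
      qed
      moreover have "ennreal (1 / real K ^ m) * of_nat N = ennreal (1 / real K ^ m * real N)" for N :: nat
      proof -
        have "ennreal (1 / real K ^ m * real N) = ennreal (1 / real K ^ m) * ennreal (real N)"
          by (rule ennreal_mult) auto
        thus ?thesis by (simp add: ennreal_of_nat_eq_real_of_nat)
      qed
      ultimately have "emeasure UP A = ennreal (1 / real K ^ m) * of_nat (card {s\<in>S. \<Phi> s x \<in> F})"
        unfolding LHS cardF by metis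
      thus ?thesis unfolding A_def by simp
    qed
    have Fsum: "(\<Sum>s\<in>S. indicator F (\<Phi> s x) :: ennreal) = of_nat (card {s\<in>S. \<Phi> s x \<in> F})" for x
    proof -
      have "(\<Sum>s\<in>{s\<in>S. \<Phi> s x \<in> F}. 1 :: ennreal) = (\<Sum>s\<in>S. if \<Phi> s x \<in> F then 1 else 0)"
        using Sfin(1) by (rule sum.inter_filter)
      moreover have "(\<Sum>s\<in>S. indicator F (\<Phi> s x) :: ennreal) = (\<Sum>s\<in>S. if \<Phi> s x \<in> F then 1 else 0)"
        by (intro sum.cong refl) (simp add: indicator_def)
      ultimately show ?thesis by simp
    qed
    have imeas: "(\<lambda>x. indicator F (\<Phi> s x) :: ennreal) \<in> borel_measurable MI" if s: "s \<in> S" for s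
      by (rule measurable_compose[OF \<Phi>m[OF s] borel_measurable_indicator[OF Fs]])
    have smeas: "(\<lambda>x. \<Sum>s\<in>S. indicator F (\<Phi> s x) :: ennreal) \<in> borel_measurable MI"
      using imeas by (rule borel_measurable_sum)
    have "emeasure P0 F = (\<integral>\<^sup>+ x. emeasure UP {y\<in>PiE {..<n} (\<lambda>_. {1..K}). (\<lambda>i\<in>{..<n}. (x i, y i)) \<in> F} \<partial>MI)"
      unfolding P0_def MI_def UP_def using Kpos Fs unfolding P0_def
      by (intro PiM_pair_uniform LX_prob) auto
    also have "\<dots> \<le> (\<integral>\<^sup>+ x. ennreal (1 / real K ^ m) * (\<Sum>s\<in>S. indicator F (\<Phi> s x)) + indicator Dc x \<partial>MI)"
      by (intro nn_integral_mono) (simp only: Fsum pw)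
    also have "\<dots> = ennreal (1 / real K ^ m) * (\<Sum>s\<in>S. \<integral>\<^sup>+ x. indicator F (\<Phi> s x) \<partial>MI) + emeasure MI Dc"
    proof -
      have "(\<integral>\<^sup>+ x. ennreal (1 / real K ^ m) * (\<Sum>s\<in>S. indicator F (\<Phi> s x)) + indicator Dc x \<partial>MI) =
            (\<integral>\<^sup>+ x. ennreal (1 / real K ^ m) * (\<Sum>s\<in>S. indicator F (\<Phi> s x)) \<partial>MI) + (\<integral>\<^sup>+ x. indicator Dc x \<partial>MI)"
        using smeas Dcs by (intro nn_integral_add borel_measurable_times_ennreal) auto
      also have "(\<integral>\<^sup>+ x. ennreal (1 / real K ^ m) * (\<Sum>s\<in>S. indicator F (\<Phi> s x)) \<partial>MI) =
            ennreal (1 / real K ^ m) * (\<integral>\<^sup>+ x. (\<Sum>s\<in>S. indicator F (\<Phi> s x)) \<partial>MI)"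
        using smeas by (rule nn_integral_cmult)
      also have "(\<integral>\<^sup>+ x. (\<Sum>s\<in>S. indicator F (\<Phi> s x)) \<partial>MI) = (\<Sum>s\<in>S. \<integral>\<^sup>+ x. indicator F (\<Phi> s x) \<partial>MI)"
        using imeas by (rule nn_integral_sum)
      also have "(\<integral>\<^sup>+ x. indicator Dc x \<partial>MI) = emeasure MI Dc" using Dcs by simp
      finally show ?thesis .
    qed
    also have "\<dots> \<le> ennreal (1 / real K ^ m) * (\<Sum>s\<in>S. ennreal \<alpha>) + emeasure MI Dc"
      using intL Lbound by (intro add_mono mult_left_mono sum_mono) auto
    also have "\<dots> = ennreal (\<alpha> + measure MI Dc)"
    proof -
      have "(\<Sum>s\<in>S. ennreal \<alpha>) = ennreal (real K ^ m * \<alpha>)"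
        using Sfin alpha by (simp add: ennreal_of_nat_eq_real_of_nat ennreal_mult)
      hence "ennreal (1 / real K ^ m) * (\<Sum>s\<in>S. ennreal \<alpha>) = ennreal (1 / real K ^ m) * ennreal (real K ^ m * \<alpha>)"
        by simp
      also have "\<dots> = ennreal (1 / real K ^ m * (real K ^ m * \<alpha>))"
        using alpha by (intro ennreal_mult[symmetric]) auto
      also have "1 / real K ^ m * (real K ^ m * \<alpha>) = \<alpha>" using Kpos by simp
      finally show ?thesis using alpha by (simp add: MI.emeasure_eq_measure ennreal_plus)
    qed
    finally have "ennreal (measure P0 F) \<le> ennreal (\<alpha> + measure MI Dc)"
      by (simp add: P0.emeasure_eq_measure)
    hence "measure P0 F \<le> \<alpha> + measure MI Dc" using alpha by (subst (asm) ennreal_le_iff) auto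
    thus ?thesis using Dm by simp
  qed
  have mF: "measure P0 F \<le> \<alpha>"
  proof -
    have lim: "(\<lambda>m. \<alpha> + real n ^ 2 / real m) \<longlonglongrightarrow> \<alpha>"
      using tendsto_add[OF tendsto_const lim_const_over_n, of \<alpha> "real n ^ 2"] by simp
    show ?thesis
      by (rule LIMSEQ_le_const[OF lim]) (use bound in \<open>auto intro!: exI[of _ 1]\<close>)
  qed
  have "measure P0 {\<omega>\<in>space P0. 1 \<le> C \<omega>} = 1 - measure P0 F"
    unfolding Gc using Fs by (rule P0.prob_compl)
  hence "measure P0 {\<omega>\<in>space P0. 1 \<le> C \<omega>} \<ge> 1 - \<alpha>" using mF by simp
  thus ?thesis unfolding P0_def .
qed

end
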